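(* Let $T$ be a spherically homogeneous rooted tree in which every vertex has at least $2$ children, and let $G\le\mathrm{Aut}~T$ be a weakly branch group admitting a finitely generated non-trivial normal subgroup $N$ of infinite index in $G$. Then $G$ does not have property $\mathrm{(LR)}$.
   Context: $\mathrm{Aut}~T$ is the group of automorphisms of $T$ fixing the root; $\mathcal{L}_n$ is the $n$th level; $T_v$ is the subtree of descendants of $v$. For $G\le\mathrm{Aut}~T$, $\mathrm{rist}_G(v)$ is the subgroup of elements of $G$ fixing every vertex outside $T_v$, and $\mathrm{Rist}_G(n)=\prod_{v\in\mathcal{L}_n}\mathrm{rist}_G(v)$. $G$ is weakly branch if it acts transitively on every level of $T$ and $\mathrm{Rist}_G(n)$ is infinite for every $n\ge1$. $H\le G$ is a virtual retract of $G$ if there is a finite-index $K\le G$ containing $H$ and a homomorphism $K\to H$ restricting to the identity on $H$; $G$ has $\mathrm{(LR)}$ if every finitely generated subgroup of $G$ is a virtual retract of $G$. *)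

theory Defs
  imports "HOL-Algebra.Algebra"
begin

text \<open>Spherically homogeneous rooted tree with branching sequence m:
 the vertices of level n are the words v of length n with v!i < m i;
 the root is the empty word; u and w are adjacent iff one is obtained from the other
 by appending one letter.\<close>

definition level :: "(nat \<Rightarrow> nat) \<Rightarrow> nat \<Rightarrow> nat list set" where
  "level m n = {v. length v = n \<and> (\<forall>i<n. v ! i < m i)}"

definition verts :: "(nat \<Rightarrow> nat) \<Rightarrow> nat list set" where
  "verts m = (\<Union>n. level m n)"

definition adj :: "nat list \<Rightarrow> nat list \<Rightarrow> bool" where
  "adj u w \<longleftrightarrow> (\<exists>i. w = u @ [i]) \<or> (\<exists>i. u = w @ [i])"

text \<open>Automorphisms of the rooted tree fixing the root (extended by the identity
 outside the vertex set so that equality of functions is equality of automorphisms).\<close>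

definition tree_auts :: "(nat \<Rightarrow> nat) \<Rightarrow> (nat list \<Rightarrow> nat list) set" where
  "tree_auts m = {f. bij_betw f (verts m) (verts m) \<and> f [] = []
      \<and> (\<forall>u\<in>verts m. \<forall>w\<in>verts m. adj u w \<longleftrightarrow> adj (f u) (f w))
      \<and> (\<forall>x. x \<notin> verts m \<longrightarrow> f x = x)}"

definition AutT :: "(nat \<Rightarrow> nat) \<Rightarrow> (nat list \<Rightarrow> nat list) monoid" where
  "AutT m = \<lparr>carrier = tree_auts m, monoid.mult = (\<lambda>f g. f \<circ> g), one = id\<rparr>"

definition subtree :: "(nat \<Rightarrow> nat) \<Rightarrow> nat list \<Rightarrow> nat list set" where
  "subtree m v = {x \<in> verts m. (\<exists>w. x = v @ w)}"

definition rist :: "(nat \<Rightarrow> nat) \<Rightarrow> (nat list \<Rightarrow> nat list) set \<Rightarrow> nat list \<Rightarrow> (nat list \<Rightarrow> nat list) set" where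
  "rist m G v = {g \<in> G. \<forall>x \<in> verts m - subtree m v. g x = x}"

text \<open>Rist_G(n): the (internal direct) product of the rigid stabilisers of level n,
 i.e. the subgroup they generate.\<close>
definition Rist :: "(nat \<Rightarrow> nat) \<Rightarrow> (nat list \<Rightarrow> nat list) set \<Rightarrow> nat \<Rightarrow> (nat list \<Rightarrow> nat list) set" where
  "Rist m G n = generate (AutT m) (\<Union>v \<in> level m n. rist m G v)"

definition weakly_branch :: "(nat \<Rightarrow> nat) \<Rightarrow> (nat list \<Rightarrow> nat list) set \<Rightarrow> bool" where
  "weakly_branch m G \<longleftrightarrow>
     (\<forall>n. \<forall>u\<in>level m n. \<forall>w\<in>level m n. \<exists>g\<in>G. g u = w)
     \<and> (\<forall>n\<ge>1. infinite (Rist m G n))"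

definition fin_gen_subgroup :: "('a, 'b) monoid_scheme \<Rightarrow> 'a set \<Rightarrow> bool" where
  "fin_gen_subgroup Gr H \<longleftrightarrow> (\<exists>S. finite S \<and> S \<subseteq> carrier Gr \<and> H = generate Gr S)"

definition virtual_retract :: "('a, 'b) monoid_scheme \<Rightarrow> 'a set \<Rightarrow> bool" where
  "virtual_retract Gr H \<longleftrightarrow> (\<exists>K. subgroup K Gr \<and> H \<subseteq> K \<and> finite (rcosets\<^bsub>Gr\<^esub> K)
      \<and> (\<exists>\<phi> \<in> hom (Gr\<lparr>carrier := K\<rparr>) (Gr\<lparr>carrier := H\<rparr>). \<forall>h\<in>H. \<phi> h = h))"

definition has_LR :: "('a, 'b) monoid_scheme \<Rightarrow> bool" where
  "has_LR Gr \<longleftrightarrow> (\<forall>H. subgroup H Gr \<and> fin_gen_subgroup Gr H \<longrightarrow> virtual_retract Gr H)"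

end

theory Submission
  imports Defs
begin

lemma verts_iff: "x \<in> verts m \<longleftrightarrow> (\<forall>i<length x. x!i < m i)"
  unfolding verts_def level_def by auto

lemma verts_level: "x \<in> verts m \<Longrightarrow> x \<in> level m (length x)"
  unfolding verts_def level_def by auto

lemma verts_prefix: "v @ w \<in> verts m \<Longrightarrow> v \<in> verts m"
  unfolding verts_iff by (metis length_append nth_append trans_less_add1)

lemma ta_D:
  assumes "f \<in> tree_auts m"
  shows "bij_betw f (verts m) (verts m)" "f [] = []"
    "\<forall>u\<in>verts m. \<forall>w\<in>verts m. adj u w \<longleftrightarrow> adj (f u) (f w)"
    "\<forall>x. x \<notin> verts m \<longrightarrow> f x = x"
  using assms by (simp_all add: tree_auts_def)

lemma ta_verts: "f \<in> tree_auts m \<Longrightarrow> x \<in> verts m \<Longrightarrow> f x \<in> verts m"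
  by (rule bij_betw_apply[OF ta_D(1)])

lemma ta_inj: "f \<in> tree_auts m \<Longrightarrow> inj_on f (verts m)"
  by (rule bij_betw_imp_inj_on[OF ta_D(1)])

lemma ta_out: "f \<in> tree_auts m \<Longrightarrow> x \<notin> verts m \<Longrightarrow> f x = x"
  using ta_D(4) by blast

lemma ta_root: "f \<in> tree_auts m \<Longrightarrow> f [] = []"
  by (rule ta_D(2))

lemma ta_adj: "f \<in> tree_auts m \<Longrightarrow> u \<in> verts m \<Longrightarrow> w \<in> verts m \<Longrightarrow> adj u w \<Longrightarrow> adj (f u) (f w)"
  using ta_D(3) by blast

lemma ta_step:
  assumes f: "f \<in> tree_auts m"
  shows "\<forall>x. x \<in> verts m \<longrightarrow> length x = n \<longrightarrow> length (f x) = n \<and> (x \<noteq> [] \<longrightarrow> (\<exists>j. f x = f (butlast x) @ [j]))"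
proof (induction n)
  case 0
  then show ?case using ta_root[OF f] by auto
next
  case (Suc n)
  show ?case
  proof (intro allI impI)
    fix x assume x: "x \<in> verts m" "length x = Suc n"
    then obtain y i where xy: "x = y @ [i]" by (metis length_Suc_conv_rev)
    have y: "y \<in> verts m" using x xy verts_prefix by blast
    have ly: "length y = n" using x xy by simp
    have ih: "length (f y) = n" "y \<noteq> [] \<longrightarrow> (\<exists>j. f y = f (butlast y) @ [j])" using Suc.IH y ly by auto
    have "adj y x" unfolding adj_def xy by auto
    hence "adj (f y) (f x)" using ta_adj[OF f y x(1)] by blast
    then consider j where "f x = f y @ [j]" | j where "f y = f x @ [j]" unfolding adj_def by blast
    then have "\<exists>j. f x = f y @ [j]"
    proof cases
      case 1 then show ?thesis by blast
    next
      case (2 j)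
      have "y \<noteq> []" using 2 ta_root[OF f] by auto
      then obtain j' where j': "f y = f (butlast y) @ [j']" using ih by blast
      hence "f x = f (butlast y)" using 2 by simp
      moreover have "butlast y \<in> verts m" using y \<open>y \<noteq> []\<close>
        by (metis append_butlast_last_id verts_prefix)
      ultimately have "x = butlast y" using ta_inj[OF f] x(1) by (meson inj_onD)
      then show ?thesis using x ly by simp
    qed
    then show "length (f x) = Suc n \<and> (x \<noteq> [] \<longrightarrow> (\<exists>j. f x = f (butlast x) @ [j]))"
      using ih xy by auto
  qed
qed

lemma ta_len: "f \<in> tree_auts m \<Longrightarrow> x \<in> verts m \<Longrightarrow> length (f x) = length x"
  using ta_step by blast

lemma ta_prefix:
  assumes f: "f \<in> tree_auts m"
  shows "v @ w \<in> verts m \<Longrightarrow> \<exists>w'. f (v @ w) = f v @ w'"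
proof (induction w rule: rev_induct)
  case Nil then show ?case by simp
next
  case (snoc a w)
  have "v @ w \<in> verts m" using snoc.prems verts_prefix[of "v @ w" "[a]"] by simp
  then obtain w' where "f (v @ w) = f v @ w'" using snoc.IH by blast
  moreover obtain j where "f (v @ w @ [a]) = f (butlast (v @ w @ [a])) @ [j]"
    using ta_step[OF f] snoc.prems by (metis append_is_Nil_conv not_Cons_self2)
  ultimately show ?case by (metis append.assoc butlast_snoc)
qed

lemma sub_verts: "q \<in> subtree m v \<Longrightarrow> q \<in> verts m"
  unfolding subtree_def by blast

lemma sub_root_verts: "q \<in> subtree m v \<Longrightarrow> v \<in> verts m"
  unfolding subtree_def using verts_prefix by blast

lemma sub_map: "f \<in> tree_auts m \<Longrightarrow> q \<in> subtree m v \<Longrightarrow> f q \<in> subtree m (f v)"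
  unfolding subtree_def using ta_prefix ta_verts by blast

lemma fix_anc: 
  assumes f: "f \<in> tree_auts m" and q: "q \<in> subtree m v" and fq: "f q = q"
  shows "f v = v"
proof -
  obtain w where w: "q = v @ w" using q unfolding subtree_def by blast
  have v: "v \<in> verts m" using sub_root_verts q by blast
  obtain w' where "f q = f v @ w'" using ta_prefix[OF f] q w unfolding subtree_def by blast
  moreover have "length (f v) = length v" using ta_len[OF f v] .
  ultimately show ?thesis using fq w by (metis append_eq_append_conv)
qed

lemma sub_disj: "length a = length b \<Longrightarrow> q \<in> subtree m a \<Longrightarrow> q \<in> subtree m b \<Longrightarrow> a = b"
  unfolding subtree_def by (auto simp: append_eq_append_conv)

lemma rist_fix:
  assumes G: "G \<subseteq> tree_auts m" and h: "h \<in> rist m G b" and b: "b \<in> verts m"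
  shows "h b = b"
proof (rule ccontr)
  assume ne: "h b \<noteq> b"
  have ht: "h \<in> tree_auts m" using h G unfolding rist_def by blast
  have hb: "h b \<in> verts m" using ta_verts[OF ht b] .
  have "h b \<notin> subtree m b" using ne ta_len[OF ht b] unfolding subtree_def by auto
  hence "h (h b) = h b" using h hb unfolding rist_def by blast
  hence "h b = b" using ta_inj[OF ht] hb b by (meson inj_onD)
  with ne show False by simp
qed

lemma rist_pres:
  assumes G: "G \<subseteq> tree_auts m" and h: "h \<in> rist m G b" and q: "q \<in> subtree m b"
  shows "h q \<in> subtree m b"
proof -
  have ht: "h \<in> tree_auts m" using h G unfolding rist_def by blast
  show ?thesis using sub_map[OF ht q] rist_fix[OF G h sub_root_verts[OF q]] by simp
qed

lemma desc:
  assumes m: "\<forall>n. m n \<ge> 2" and v: "v \<in> verts m" and K: "length v \<le> K"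
  shows "v @ replicate (K - length v) 0 \<in> subtree m v \<and> length (v @ replicate (K - length v) 0) = K"
proof -
  have pos: "0 < m i" for i using m[rule_format, of i] by linarith
  have "v @ replicate (K - length v) 0 \<in> verts m"
    using v pos unfolding verts_iff
    by (auto simp: nth_append)
  then show ?thesis using K unfolding subtree_def by auto
qed

lemma id_ta: "id \<in> tree_auts m"
  unfolding tree_auts_def by auto

lemma inv_id: "m_inv (AutT m) id = id"
  unfolding m_inv_def AutT_def
  apply simp
  apply (rule the_equality)
  using id_ta by auto

lemma cid:
  assumes e: "a \<circ> b = id" shows "a (b x) = x"
proof -
  have "(a \<circ> b) x = id x" by (simp only: e)
  thus ?thesis by simp
qed

locale gctx =
  fixes m :: "nat \<Rightarrow> nat" and G :: "(nat list \<Rightarrow> nat list) set"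
  assumes m2: "\<forall>n. m n \<ge> 2"
    and Gsub: "G \<subseteq> tree_auts m"
    and Gcomp: "\<And>f g. f \<in> G \<Longrightarrow> g \<in> G \<Longrightarrow> f \<circ> g \<in> G"
    and Ginv: "\<And>f. f \<in> G \<Longrightarrow> \<exists>fi\<in>G. f \<circ> fi = id \<and> fi \<circ> f = id"
    and wb: "weakly_branch m G"
begin

lemma inj_G:
  assumes f: "f \<in> G" and e: "f x = f y" shows "x = y"
proof -
  obtain fi where fi: "fi \<circ> f = id" using Ginv f by blast
  have "x = fi (f x)" using cid[OF fi] by simp
  also have "\<dots> = fi (f y)" using e by simp
  also have "\<dots> = y" using cid[OF fi] by simp
  finally show ?thesis .
qed

lemma rist_nontriv:
  assumes v: "v \<in> verts m" and lv: "length v \<ge> 1"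
  shows "\<exists>h\<in>rist m G v. h \<noteq> id"
proof (rule ccontr)
  assume no: "\<not> ?thesis"
  let ?n = "length v"
  have inf: "infinite (Rist m G ?n)" using wb lv unfolding weakly_branch_def by blast
  have ex: "\<exists>w0\<in>level m ?n. \<exists>h0\<in>rist m G w0. h0 \<noteq> id"
  proof (rule ccontr)
    assume "\<not> ?thesis"
    hence H: "(\<Union>w \<in> level m ?n. rist m G w) \<subseteq> {id}" by blast
    have "x \<in> {id}" if "x \<in> Rist m G ?n" for x
      using that unfolding Rist_def
    proof (induction rule: generate.induct)
      case one then show ?case by (simp add: AutT_def)
    next
      case (incl h) then show ?case using H by blast
    next
      case (inv h) then show ?case using H inv_id by blast
    next
      case (eng h1 h2) then show ?case by (simp add: AutT_def)
    qed
    hence "finite (Rist m G ?n)" by (meson finite.emptyI finite_insert finite_subset subsetI)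
    with inf show False by blast
  qed
  then obtain w0 h0 where w0: "w0 \<in> level m ?n" and h0: "h0 \<in> rist m G w0" "h0 \<noteq> id" by blast
  have "v \<in> level m ?n" using verts_level[OF v] .
  then obtain f where f: "f \<in> G" "f w0 = v" using wb w0 unfolding weakly_branch_def by blast
  obtain fi where fi: "fi \<in> G" "f \<circ> fi = id" "fi \<circ> f = id" using Ginv f(1) by blast
  have h0G: "h0 \<in> G" using h0 unfolding rist_def by blast
  have ft: "f \<in> tree_auts m" "fi \<in> tree_auts m" using f fi Gsub by auto
  have "f \<circ> h0 \<circ> fi \<in> rist m G v"
    unfolding rist_def
  proof (intro CollectI conjI ballI)
    show "f \<circ> h0 \<circ> fi \<in> G" using Gcomp f fi h0G by blast
    fix y assume y: "y \<in> verts m - subtree m v"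
    have fy: "f (fi y) = y" using cid[OF fi(2)] by simp
    have fiy: "fi y \<in> verts m" using ta_verts[OF ft(2)] y by blast
    have "fi y \<notin> subtree m w0"
    proof
      assume "fi y \<in> subtree m w0"
      hence "f (fi y) \<in> subtree m (f w0)" using sub_map[OF ft(1)] by blast
      with fy f(2) y show False by simp
    qed
    hence "h0 (fi y) = fi y" using h0 fiy unfolding rist_def by blast
    thus "(f \<circ> h0 \<circ> fi) y = y" using fy by simp
  qed
  moreover have "f \<circ> h0 \<circ> fi \<noteq> id"
  proof
    assume "f \<circ> h0 \<circ> fi = id"
    hence "fi \<circ> (f \<circ> h0 \<circ> fi) \<circ> f = fi \<circ> f" by simp
    hence e: "fi \<circ> (f \<circ> h0) = id" using fi by (simp add: comp_assoc)
    have "h0 = (fi \<circ> f) \<circ> h0" using fi by simp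
    also have "\<dots> = fi \<circ> (f \<circ> h0)" by (simp add: comp_assoc)
    finally have "h0 = id" using e by simp
    with h0 show False by simp
  qed
  ultimately show False using no by blast
qed

lemma rist_inv:
  assumes h: "h \<in> rist m G b" and hi: "hi \<in> G" "h \<circ> hi = id" "hi \<circ> h = id"
  shows "hi \<in> rist m G b"
  unfolding rist_def
proof (intro CollectI conjI ballI)
  show "hi \<in> G" by fact
  fix z assume "z \<in> verts m - subtree m b"
  hence "h z = z" using h unfolding rist_def by blast
  thus "hi z = z" using cid[OF hi(3), of z] by simp
qed

lemma comm_in:
  assumes y: "y \<in> G" "yi \<in> G" "y \<circ> yi = id" "yi \<circ> y = id" and yb: "y b \<noteq> b"
    and b: "b \<in> verts m"
    and h: "h \<in> rist m G b" and hi: "hi \<in> rist m G b" "h \<circ> hi = id"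
    and q: "q \<in> subtree m b"
  shows "(y \<circ> h \<circ> yi \<circ> hi) q = hi q"
proof -
  have yt: "y \<in> tree_auts m" "yi \<in> tree_auts m" using y Gsub by auto
  have s1: "hi q \<in> subtree m b" using rist_pres[OF Gsub hi(1) q] .
  have s2: "yi (hi q) \<in> subtree m (yi b)" using sub_map[OF yt(2) s1] .
  have ne: "yi b \<noteq> b" using yb cid[OF y(3), of b] by auto
  have "yi (hi q) \<notin> subtree m b"
    using sub_disj[OF ta_len[OF yt(2) b] s2] ne by blast
  hence "h (yi (hi q)) = yi (hi q)" using h sub_verts[OF s2] unfolding rist_def by blast
  thus ?thesis using cid[OF y(3), of "hi q"] by simp
qed

lemma comm_out:
  assumes y: "y \<in> G" "yi \<in> G" "y \<circ> yi = id" "yi \<circ> y = id"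
    and h: "h \<in> rist m G b" and hi: "hi \<in> rist m G b"
    and z: "z \<in> verts m" "z \<notin> subtree m b" "z \<notin> subtree m (y b)"
  shows "(y \<circ> h \<circ> yi \<circ> hi) z = z"
proof -
  have yt: "y \<in> tree_auts m" "yi \<in> tree_auts m" using y Gsub by auto
  have "hi z = z" using hi z unfolding rist_def by blast
  moreover have "yi z \<notin> subtree m b"
  proof
    assume "yi z \<in> subtree m b"
    hence "y (yi z) \<in> subtree m (y b)" using sub_map[OF yt(1)] by blast
    with z cid[OF y(3), of z] show False by simp
  qed
  hence "h (yi z) = yi z" using h ta_verts[OF yt(2) z(1)] unfolding rist_def by blast
  ultimately show ?thesis using cid[OF y(3), of z] by simp
qed

end

locale nctx = gctx +
  fixes N c
  assumes NG: "N \<subseteq> G"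
    and Ncomp: "\<And>f g. f \<in> N \<Longrightarrow> g \<in> N \<Longrightarrow> f \<circ> g \<in> N"
    and Ninv: "\<And>g. g \<in> N \<Longrightarrow> \<exists>gi\<in>N. g \<circ> gi = id \<and> gi \<circ> g = id"
    and Nnorm: "\<And>f fi g. f \<in> G \<Longrightarrow> fi \<in> G \<Longrightarrow> f \<circ> fi = id \<Longrightarrow> fi \<circ> f = id \<Longrightarrow> g \<in> N \<Longrightarrow> f \<circ> g \<circ> fi \<in> N"
    and cG: "c \<in> G"
    and comm: "\<And>n. n \<in> N \<Longrightarrow> c \<circ> n = n \<circ> c"
begin

lemma comm_N:
  assumes y: "y \<in> N" "yi \<in> N" "y \<circ> yi = id" "yi \<circ> y = id" and h: "h \<in> G" "hi \<in> G" "h \<circ> hi = id" "hi \<circ> h = id"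
  shows "y \<circ> h \<circ> yi \<circ> hi \<in> N"
proof -
  have "h \<circ> yi \<circ> hi \<in> N" using Nnorm h y by blast
  hence "y \<circ> (h \<circ> yi \<circ> hi) \<in> N" using Ncomp y by blast
  thus ?thesis by (simp add: comp_assoc)
qed

lemma lemA:
  assumes b: "b \<in> verts m" "length b \<ge> 1" and cb: "c b \<noteq> b" and y: "y \<in> N" and yb: "y b \<noteq> b"
  shows "c b = y b"
proof -
  obtain h where h: "h \<in> rist m G b" "h \<noteq> id" using rist_nontriv b by blast
  have hG: "h \<in> G" using h unfolding rist_def by blast
  obtain hi where hi: "hi \<in> G" "h \<circ> hi = id" "hi \<circ> h = id" using Ginv hG by blast
  obtain yi where yi: "yi \<in> N" "y \<circ> yi = id" "yi \<circ> y = id" using Ninv y by blast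
  have yG: "y \<in> G" "yi \<in> G" using y yi NG by auto
  have hir: "hi \<in> rist m G b" using rist_inv h hi by blast
  have "hi \<noteq> id" using h hi by auto
  then obtain q where q: "hi q \<noteq> q" by (auto simp: fun_eq_iff)
  have hit: "hi \<in> tree_auts m" using hi Gsub by auto
  have qv: "q \<in> verts m" using q ta_out[OF hit] by blast
  have qs: "q \<in> subtree m b" using q qv hir unfolding rist_def by blast
  define x where "x = y \<circ> h \<circ> yi \<circ> hi"
  have xN: "x \<in> N" unfolding x_def using comm_N y yi hG hi by blast
  have xq: "x q = hi q" unfolding x_def using comm_in[OF yG(1) yG(2) yi(2) yi(3) yb b(1) h(1) hir hi(2) qs] .
  have ct: "c \<in> tree_auts m" using cG Gsub by auto
  have cq: "c q \<in> subtree m (c b)" using sub_map[OF ct qs] .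
  have "x (c q) = c (x q)" using fun_cong[OF comm[OF xN], of q] by simp
  also have "\<dots> = c (hi q)" using xq by simp
  finally have xcq0: "x (c q) = c (hi q)" .
  have "c (hi q) \<noteq> c q" using q inj_G[OF cG] by blast
  hence xcq: "x (c q) \<noteq> c q" using xcq0 by simp
  have cqb: "c q \<notin> subtree m b" using sub_disj[OF ta_len[OF ct b(1)] cq] cb by blast
  have "c q \<in> subtree m (y b)"
  proof (rule ccontr)
    assume "c q \<notin> subtree m (y b)"
    hence "x (c q) = c q" unfolding x_def
      using comm_out[OF yG(1) yG(2) yi(2) yi(3) h(1) hir sub_verts[OF cq] cqb] by blast
    with xcq show False by simp
  qed
  moreover have "length (c b) = length (y b)"
    using ta_len[OF ct b(1)] ta_len[of y m b] yG Gsub b by auto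
  ultimately show ?thesis using sub_disj cq by blast
qed

lemma core:
  assumes g0: "g0 \<in> N" "g0 \<noteq> id" and cne: "c \<noteq> id"
  shows False
proof -
  have ct: "c \<in> tree_auts m" using cG Gsub by auto
  obtain u where u: "c u \<noteq> u" using cne by (auto simp: fun_eq_iff)
  have uv: "u \<in> verts m" using u ta_out[OF ct] by blast
  have un: "u \<noteq> []" using u ta_root[OF ct] by auto
  have g0t: "g0 \<in> tree_auts m" using g0 NG Gsub by auto
  obtain v0 where v0: "g0 v0 \<noteq> v0" using g0 by (auto simp: fun_eq_iff)
  have v0v: "v0 \<in> verts m" using v0 ta_out[OF g0t] by blast
  define K where "K = max (length u) (length v0)"
  define d where "d = u @ replicate (K - length u) 0"
  define e where "e = v0 @ replicate (K - length v0) 0"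
  have d: "d \<in> subtree m u" "length d = K" using desc[OF m2 uv, of K] unfolding d_def K_def by auto
  have e: "e \<in> subtree m v0" "length e = K" using desc[OF m2 v0v, of K] unfolding e_def K_def by auto
  have cd: "c d \<noteq> d" using fix_anc[OF ct d(1)] u by blast
  have ge: "g0 e \<noteq> e" using fix_anc[OF g0t e(1)] v0 by blast
  have dl: "d \<in> level m K" using verts_level[OF sub_verts[OF d(1)]] d(2) by simp
  have el: "e \<in> level m K" using verts_level[OF sub_verts[OF e(1)]] e(2) by simp
  obtain f where f: "f \<in> G" "f e = d" using wb dl el unfolding weakly_branch_def by blast
  obtain fi where fi: "fi \<in> G" "f \<circ> fi = id" "fi \<circ> f = id" using Ginv f(1) by blast
  define g where "g = f \<circ> g0 \<circ> fi"
  have gN: "g \<in> N" unfolding g_def using Nnorm f fi g0 by blast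
  have "fi (f e) = e" using fun_cong[OF fi(3), of e] by simp
  hence "fi d = e" using f(2) by simp
  hence gd: "g d = f (g0 e)" unfolding g_def by simp
  have "f (g0 e) \<noteq> f e" using ge inj_G[OF f(1)] by blast
  hence gdd: "g d \<noteq> d" using gd f(2) by simp
  define v where "v = d"
  have lu: "length u \<ge> 1" using un by (cases u) auto
  have vv: "v \<in> verts m" "length v \<ge> 1" using sub_verts[OF d(1)] d(2) lu unfolding v_def K_def by auto
  have cv: "c v \<noteq> v" using cd v_def by simp
  have gv: "g v \<noteq> v" using gdd v_def by simp
  obtain h where h: "h \<in> rist m G v" "h \<noteq> id" using rist_nontriv vv by blast
  have hG: "h \<in> G" using h unfolding rist_def by blast
  obtain hi where hi: "hi \<in> G" "h \<circ> hi = id" "hi \<circ> h = id" using Ginv hG by blast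
  obtain gi where gi: "gi \<in> N" "g \<circ> gi = id" "gi \<circ> g = id" using Ninv gN by blast
  have gG: "g \<in> G" "gi \<in> G" using gN gi NG by auto
  have hir: "hi \<in> rist m G v" using rist_inv h hi by blast
  have "hi \<noteq> id" using h hi by auto
  then obtain p where p: "hi p \<noteq> p" by (auto simp: fun_eq_iff)
  have hit: "hi \<in> tree_auts m" using hi Gsub by auto
  have pv: "p \<in> verts m" using p ta_out[OF hit] by blast
  have ps: "p \<in> subtree m v" using p pv hir unfolding rist_def by blast
  define x where "x = g \<circ> h \<circ> gi \<circ> hi"
  have xN: "x \<in> N" unfolding x_def using comm_N gN gi hG hi by blast
  have xp: "x p = hi p" unfolding x_def using comm_in[OF gG(1) gG(2) gi(2) gi(3) gv vv(1) h(1) hir hi(2) ps] .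
  have cp: "c p \<noteq> p" using fix_anc[OF ct ps] cv by blast
  have lp: "length p \<ge> 1" using ps vv unfolding subtree_def by auto
  have "c p = x p" using lemA[OF pv lp cp xN] xp p by simp
  hence "c p \<in> subtree m v" using xp rist_pres[OF Gsub hir ps] by simp
  moreover have "c p \<in> subtree m (c v)" using sub_map[OF ct ps] .
  ultimately have "c v = v" using sub_disj[OF ta_len[OF ct vv(1)]] by blast
  with cv show False by simp
qed

end


theorem corollary3p4:
  fixes m :: "nat \<Rightarrow> nat" and G N :: "(nat list \<Rightarrow> nat list) set"
  assumes "\<forall>n. m n \<ge> 2"
    and "subgroup G (AutT m)"
    and "weakly_branch m G"
    and "N \<lhd> (AutT m)\<lparr>carrier := G\<rparr>"
    and "fin_gen_subgroup ((AutT m)\<lparr>carrier := G\<rparr>) N"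
    and "N \<noteq> {id}"
    and "infinite (rcosets\<^bsub>(AutT m)\<lparr>carrier := G\<rparr>\<^esub> N)"
  shows "\<not> has_LR ((AutT m)\<lparr>carrier := G\<rparr>)"
proof
  define Gr where "Gr = (AutT m)\<lparr>carrier := G\<rparr>"
  assume LR: "has_LR ((AutT m)\<lparr>carrier := G\<rparr>)"
  have nN: "N \<lhd> Gr" using assms(4) unfolding Gr_def .
  interpret Nn: normal N Gr by (rule nN)
  have GrG[simp]: "carrier Gr = G" and Grm[simp]: "\<And>x y. x \<otimes>\<^bsub>Gr\<^esub> y = x \<circ> y"
    and Gr1[simp]: "\<one>\<^bsub>Gr\<^esub> = id" by (simp_all add: Gr_def AutT_def)
  have Gsub: "G \<subseteq> tree_auts m" using subgroup.subset[OF assms(2)] by (simp add: AutT_def)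
  have rinv: "\<And>f. f \<in> G \<Longrightarrow> f \<circ> inv\<^bsub>Gr\<^esub> f = id" using Nn.r_inv by simp
  have linv: "\<And>f. f \<in> G \<Longrightarrow> inv\<^bsub>Gr\<^esub> f \<circ> f = id" using Nn.l_inv by simp
  have invG: "\<And>f. f \<in> G \<Longrightarrow> inv\<^bsub>Gr\<^esub> f \<in> G" using Nn.inv_closed by simp
  have compG: "\<And>f g. f \<in> G \<Longrightarrow> g \<in> G \<Longrightarrow> f \<circ> g \<in> G" using Nn.m_closed by simp
  have invu: "\<And>f fi. f \<in> G \<Longrightarrow> fi \<in> G \<Longrightarrow> f \<circ> fi = id \<Longrightarrow> fi = inv\<^bsub>Gr\<^esub> f"
  proof -
    fix f fi assume a: "f \<in> G" "fi \<in> G" "f \<circ> fi = id"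
    have "fi = (inv\<^bsub>Gr\<^esub> f \<circ> f) \<circ> fi" using linv a by simp
    also have "\<dots> = inv\<^bsub>Gr\<^esub> f \<circ> (f \<circ> fi)" by (simp add: comp_assoc)
    finally show "fi = inv\<^bsub>Gr\<^esub> f" using a by simp
  qed
  have NG: "N \<subseteq> G" using Nn.subset by simp
  have Ncomp: "\<And>f g. f \<in> N \<Longrightarrow> g \<in> N \<Longrightarrow> f \<circ> g \<in> N"
    using subgroup.m_closed[OF Nn.subgroup_axioms] by simp
  have NinvN: "\<And>g. g \<in> N \<Longrightarrow> inv\<^bsub>Gr\<^esub> g \<in> N" using Nn.m_inv_closed by simp
  have Nconj: "\<And>f g. f \<in> G \<Longrightarrow> g \<in> N \<Longrightarrow> f \<circ> g \<circ> inv\<^bsub>Gr\<^esub> f \<in> N"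
    using Nn.inv_op_closed2 by simp
  have NsubGr: "subgroup N Gr" by (rule Nn.subgroup_axioms)
  have fgN: "fin_gen_subgroup Gr N" using assms(5) unfolding Gr_def .
  have "virtual_retract Gr N" using LR NsubGr fgN unfolding has_LR_def Gr_def by blast
  then obtain K \<phi> where K: "subgroup K Gr" "N \<subseteq> K" "finite (rcosets\<^bsub>Gr\<^esub> K)"
    and phi: "\<phi> \<in> hom (Gr\<lparr>carrier := K\<rparr>) (Gr\<lparr>carrier := N\<rparr>)" and phiN: "\<forall>h\<in>N. \<phi> h = h"
    unfolding virtual_retract_def by blast
  have KG: "K \<subseteq> G" using subgroup.subset[OF K(1)] by simp
  have Kcomp: "\<And>f g. f \<in> K \<Longrightarrow> g \<in> K \<Longrightarrow> f \<circ> g \<in> K" using subgroup.m_closed[OF K(1)] by simp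
  have KinvK: "\<And>g. g \<in> K \<Longrightarrow> inv\<^bsub>Gr\<^esub> g \<in> K" using subgroup.m_inv_closed[OF K(1)] by simp
  have phim: "\<And>a b. a \<in> K \<Longrightarrow> b \<in> K \<Longrightarrow> \<phi> (a \<circ> b) = \<phi> a \<circ> \<phi> b"
    using hom_mult[OF phi] by simp
  have phiK: "\<And>a. a \<in> K \<Longrightarrow> \<phi> a \<in> N" using hom_in_carrier[OF phi] by simp
  have "K \<noteq> N" using K(3) assms(7) unfolding Gr_def by auto
  then obtain l where l: "l \<in> K" "l \<notin> N" using K(2) by blast
  define a where "a = \<phi> l"
  have aN: "a \<in> N" using phiK l unfolding a_def by blast
  have aG: "a \<in> G" using aN NG by blast
  define c where "c = l \<circ> inv\<^bsub>Gr\<^esub> a"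
  have cK: "c \<in> K" unfolding c_def using Kcomp KinvK aN K(2) l by blast
  have cG: "c \<in> G" using cK KG by blast
  have phic: "\<phi> c = id"
  proof -
    have "\<phi> c = \<phi> l \<circ> \<phi> (inv\<^bsub>Gr\<^esub> a)" unfolding c_def using phim l KinvK aN K(2) by blast
    also have "\<dots> = a \<circ> inv\<^bsub>Gr\<^esub> a" using phiN NinvN aN a_def by simp
    finally show ?thesis using rinv aG by simp
  qed
  have cne: "c \<noteq> id"
  proof
    assume "c = id"
    hence "l \<circ> inv\<^bsub>Gr\<^esub> a \<circ> a = a" unfolding c_def by simp
    hence "l = a" using linv[OF aG] by (simp add: comp_assoc)
    with l aN show False by simp
  qed
  have phiid: "\<phi> id = id" using phiN subgroup.one_closed[OF Nn.subgroup_axioms] by simp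
  have comm: "\<And>n. n \<in> N \<Longrightarrow> c \<circ> n = n \<circ> c"
  proof -
    fix n assume n: "n \<in> N"
    have nK: "n \<in> K" "inv\<^bsub>Gr\<^esub> n \<in> K" using n K(2) NinvN by auto
    have ciK: "inv\<^bsub>Gr\<^esub> c \<in> K" using KinvK cK by blast
    have phici: "\<phi> (inv\<^bsub>Gr\<^esub> c) = id"
    proof -
      have "\<phi> (inv\<^bsub>Gr\<^esub> c) \<circ> \<phi> c = \<phi> (inv\<^bsub>Gr\<^esub> c \<circ> c)" using phim ciK cK by simp
      also have "\<dots> = id" using linv cG phiid by simp
      finally show ?thesis using phic by simp
    qed
    define t where "t = c \<circ> n \<circ> inv\<^bsub>Gr\<^esub> c \<circ> inv\<^bsub>Gr\<^esub> n"
    have tN: "t \<in> N" unfolding t_def using Ncomp Nconj cG n NinvN by blast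
    have "\<phi> t = \<phi> c \<circ> \<phi> n \<circ> \<phi> (inv\<^bsub>Gr\<^esub> c) \<circ> \<phi> (inv\<^bsub>Gr\<^esub> n)"
    proof -
      have k1: "c \<circ> n \<in> K" using Kcomp cK nK by blast
      have k2: "c \<circ> n \<circ> inv\<^bsub>Gr\<^esub> c \<in> K" using Kcomp k1 ciK by blast
      have "\<phi> t = \<phi> (c \<circ> n \<circ> inv\<^bsub>Gr\<^esub> c) \<circ> \<phi> (inv\<^bsub>Gr\<^esub> n)"
        unfolding t_def using phim k2 nK by blast
      also have "\<phi> (c \<circ> n \<circ> inv\<^bsub>Gr\<^esub> c) = \<phi> (c \<circ> n) \<circ> \<phi> (inv\<^bsub>Gr\<^esub> c)"
        using phim k1 ciK by blast
      also have "\<phi> (c \<circ> n) = \<phi> c \<circ> \<phi> n" using phim cK nK by blast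
      finally show ?thesis .
    qed
    also have "\<dots> = n \<circ> inv\<^bsub>Gr\<^esub> n" using phic phici phiN n NinvN by simp
    also have "\<dots> = id" using rinv n NG by blast
    finally have "t = id" using phiN tN by simp
    hence e1: "t \<circ> (n \<circ> c) = n \<circ> c" by simp
    have in1: "inv\<^bsub>Gr\<^esub> n \<circ> n = id" using linv n NG by blast
    have ic1: "inv\<^bsub>Gr\<^esub> c \<circ> c = id" using linv cG by blast
    have "t \<circ> (n \<circ> c) = c \<circ> n \<circ> inv\<^bsub>Gr\<^esub> c \<circ> (inv\<^bsub>Gr\<^esub> n \<circ> n) \<circ> c"
      unfolding t_def by (simp add: comp_assoc)
    also have "\<dots> = c \<circ> n \<circ> (inv\<^bsub>Gr\<^esub> c \<circ> c)" by (simp add: in1 comp_assoc)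
    also have "\<dots> = c \<circ> n" by (simp add: ic1)
    finally show "c \<circ> n = n \<circ> c" using e1 by simp
  qed
  have gc: "gctx m G"
  proof
    show "\<forall>n. m n \<ge> 2" by (rule assms(1))
    show "G \<subseteq> tree_auts m" by (rule Gsub)
    show "\<And>f g. f \<in> G \<Longrightarrow> g \<in> G \<Longrightarrow> f \<circ> g \<in> G" by (rule compG)
    show "\<And>f. f \<in> G \<Longrightarrow> \<exists>fi\<in>G. f \<circ> fi = id \<and> fi \<circ> f = id" using invG rinv linv by blast
    show "weakly_branch m G" by (rule assms(3))
  qed
  have nc: "nctx m G N c"
  proof (rule nctx.intro[OF gc], unfold_locales)
    show "N \<subseteq> G" by (rule NG)
    show "\<And>f g. f \<in> N \<Longrightarrow> g \<in> N \<Longrightarrow> f \<circ> g \<in> N" by (rule Ncomp)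
    show "\<And>g. g \<in> N \<Longrightarrow> \<exists>gi\<in>N. g \<circ> gi = id \<and> gi \<circ> g = id" using NinvN rinv linv NG by blast
    show "\<And>f fi g. f \<in> G \<Longrightarrow> fi \<in> G \<Longrightarrow> f \<circ> fi = id \<Longrightarrow> fi \<circ> f = id \<Longrightarrow> g \<in> N \<Longrightarrow> f \<circ> g \<circ> fi \<in> N"
    proof -
      fix f fi g assume a: "f \<in> G" "fi \<in> G" "f \<circ> fi = id" "fi \<circ> f = id" "g \<in> N"
      have "fi = inv\<^bsub>Gr\<^esub> f" using invu a by blast
      thus "f \<circ> g \<circ> fi \<in> N" using Nconj a by simp
    qed
    show "c \<in> G" by (rule cG)
    show "\<And>n. n \<in> N \<Longrightarrow> c \<circ> n = n \<circ> c" by (rule comm)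
  qed
  obtain g0 where g0: "g0 \<in> N" "g0 \<noteq> id" using assms(6) subgroup.one_closed[OF Nn.subgroup_axioms] by auto
  show False using nctx.core[OF nc g0 cne] .
qed

end
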